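(* Let $(X,\tau_\delta)_{\delta>0}$ be a simple Hilbert dilation system with $d=\dim X$, let $1\le k\le d$ and $H$ a $k$-dimensional subspace of $X$. Let $\eta\in(0,1/2)$ and let $I\subseteq(0,\infty)$ be a compact interval with $r(I)/l(I)\ge(2^d/\eta)^{dk+2}$. Then there exist $\delta\in I$ and a $k$-dimensional dilation-invariant subspace $V\subseteq X$ with $\cos\theta_{\max}(\tau_\delta H,V)\ge1-\eta$.
   Context: A Hilbert dilation system $(X,\tau_\delta)_{\delta>0}$: $X$ is a finite-dimensional real Hilbert space with an orthogonal decomposition $X=\bigoplus_{\nu=1}^m X_\nu$ (some $X_\nu$ may be $\{0\}$), and $\tau_\delta:X\to X$ is linear with $\tau_\delta|_{X_\nu}=\delta^{-\nu}\mathrm{id}$. It is simple if $\dim X_\nu\in\{0,1\}$ for all $\nu$. A subspace $V$ is dilation-invariant if $\tau_\delta V=V$ for all $\delta>0$. For subspaces $V,W$, $\theta_{\max}(V,W)=\arccos\big(\inf\{|\Pi_Wv|/|v|:v\in V\setminus\{0\}\}\big)$, $\Pi_W$ the orthogonal projection. $l(I)\le r(I)$ are the endpoints of $I$. *)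

theory Defs
  imports "HOL-Analysis.Analysis"
begin

definition hilbert_dilation_system ::
    "(nat \<Rightarrow> 'a::euclidean_space set) \<Rightarrow> nat \<Rightarrow> (real \<Rightarrow> 'a \<Rightarrow> 'a) \<Rightarrow> bool" where
  "hilbert_dilation_system Xs m tau \<longleftrightarrow>
     (\<forall>\<nu>\<in>{1..m}. subspace (Xs \<nu>)) \<and>
     (\<forall>i\<in>{1..m}. \<forall>j\<in>{1..m}. i \<noteq> j \<longrightarrow> (\<forall>x\<in>Xs i. \<forall>y\<in>Xs j. x \<bullet> y = 0)) \<and>
     span (\<Union>\<nu>\<in>{1..m}. Xs \<nu>) = UNIV \<and>
     (\<forall>\<delta>>0. linear (tau \<delta>) \<and>
        (\<forall>\<nu>\<in>{1..m}. \<forall>x\<in>Xs \<nu>. tau \<delta> x = (\<delta> powr (- real \<nu>)) *\<^sub>R x))"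

definition simple_dilation_system :: "(nat \<Rightarrow> 'a::euclidean_space set) \<Rightarrow> nat \<Rightarrow> bool" where
  "simple_dilation_system Xs m \<longleftrightarrow> (\<forall>\<nu>\<in>{1..m}. dim (Xs \<nu>) \<le> 1)"

definition dilation_invariant :: "(real \<Rightarrow> 'a \<Rightarrow> 'a) \<Rightarrow> 'a::euclidean_space set \<Rightarrow> bool" where
  "dilation_invariant tau V \<longleftrightarrow> subspace V \<and> (\<forall>\<delta>>0. tau \<delta> ` V = V)"

definition orth_proj :: "'a::euclidean_space set \<Rightarrow> 'a \<Rightarrow> 'a" where
  "orth_proj W v = (THE w. w \<in> W \<and> (\<forall>u\<in>W. (v - w) \<bullet> u = 0))"

definition theta_max :: "'a::euclidean_space set \<Rightarrow> 'a set \<Rightarrow> real" where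
  "theta_max V W = arccos (Inf {norm (orth_proj W v) / norm v | v. v \<in> V \<and> v \<noteq> 0})"

end

theory Submission
  imports Defs
begin


locale onb =
  fixes e :: "nat \<Rightarrow> 'a::euclidean_space" and d :: nat
  assumes on: "\<And>i j. i<d \<Longrightarrow> j<d \<Longrightarrow> e i \<bullet> e j = (if i=j then 1 else 0)"
  and sp: "span (e ` {..<d}) = UNIV"
begin

lemma inner_sum_e: "l < d \<Longrightarrow> A \<subseteq> {..<d} \<Longrightarrow> (\<Sum>i\<in>A. c i *\<^sub>R e i) \<bullet> e l = (if l \<in> A then c l else 0)"
proof -
  assume l: "l<d" and A: "A \<subseteq> {..<d}"
  have fin: "finite A" using A finite_subset by blast
  have "(\<Sum>i\<in>A. c i *\<^sub>R e i) \<bullet> e l = (\<Sum>i\<in>A. c i * (e i \<bullet> e l))"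
    by (simp add: inner_sum_left)
  also have "\<dots> = (\<Sum>i\<in>A. if i = l then c i else 0)"
    using A l on by (intro sum.cong) auto
  also have "\<dots> = (if l \<in> A then c l else 0)" using fin by (simp add: sum.delta)
  finally show ?thesis .
qed

lemma expand: "x = (\<Sum>i<d. (x \<bullet> e i) *\<^sub>R e i)"
proof -
  define y where "y = x - (\<Sum>i<d. (x \<bullet> e i) *\<^sub>R e i)"
  have "\<And>z. z \<in> e ` {..<d} \<Longrightarrow> orthogonal y z"
    using inner_sum_e by (auto simp: y_def orthogonal_def inner_diff_left)
  then have "orthogonal y y" using orthogonal_to_span[of y "e ` {..<d}" y] sp by auto
  then show ?thesis by (simp add: y_def orthogonal_def)
qed

lemma inner_expand: "x \<bullet> y = (\<Sum>i<d. (x \<bullet> e i) * (y \<bullet> e i))"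
proof -
  have "x \<bullet> y = (\<Sum>i<d. (x \<bullet> e i) *\<^sub>R e i) \<bullet> y" using expand[of x] by simp
  also have "\<dots> = (\<Sum>i<d. (x \<bullet> e i) * (e i \<bullet> y))"
    by (simp only: inner_sum_left inner_scaleR_left)
  also have "\<dots> = (\<Sum>i<d. (x \<bullet> e i) * (y \<bullet> e i))"
    by (simp add: inner_commute)
  finally show ?thesis .
qed

lemma norm_sq: "norm x ^ 2 = (\<Sum>i<d. (x \<bullet> e i)^2)"
proof -
  have "norm x ^ 2 = x \<bullet> x" by (simp add: power2_norm_eq_inner)
  also have "\<dots> = (\<Sum>i<d. (x \<bullet> e i)^2)" by (subst inner_expand) (simp add: power2_eq_square)
  finally show ?thesis .
qed

lemma e_unit: "i < d \<Longrightarrow> e i \<bullet> e i = 1" using on by auto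

lemma inj_e: "inj_on e {..<d}"
proof (rule inj_onI)
  fix x y assume "x \<in> {..<d}" "y \<in> {..<d}" "e x = e y"
  then have "e x \<bullet> e y = 1" using on by auto
  then show "x = y" using on \<open>x \<in> {..<d}\<close> \<open>y \<in> {..<d}\<close> by (auto split: if_splits)
qed

lemma indep: "A \<subseteq> {..<d} \<Longrightarrow> independent (e ` A)"
  apply (rule pairwise_orthogonal_independent)
   apply (auto simp: pairwise_def orthogonal_def)
  apply (metis lessThan_iff on subsetD)
  by (metis e_unit inner_zero_left lessThan_iff subsetD zero_neq_one)

lemma dim_span_e: "A \<subseteq> {..<d} \<Longrightarrow> dim (span (e ` A)) = card A"
  by (simp add: dim_eq_card_independent indep card_image inj_on_subset[OF inj_e])

lemma d_eq: "d = DIM('a)"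
  using dim_span_e[of "{..<d}"] sp by simp

definition proj :: "nat set \<Rightarrow> 'a \<Rightarrow> 'a" where
  "proj A x = (\<Sum>i\<in>A. (x \<bullet> e i) *\<^sub>R e i)"

lemma proj_coord: "A \<subseteq> {..<d} \<Longrightarrow> l < d \<Longrightarrow> proj A x \<bullet> e l = (if l \<in> A then x \<bullet> e l else 0)"
  unfolding proj_def by (rule inner_sum_e)

definition sq :: "nat set \<Rightarrow> 'a \<Rightarrow> real" where
  "sq A x = (\<Sum>i\<in>A. (x \<bullet> e i)^2)"

end


lemma inertia:
  fixes B :: "'a::euclidean_space \<Rightarrow> 'a \<Rightarrow> real"
  assumes add: "\<And>x y z. B (x+y) z = B x z + B y z"
    and scl: "\<And>c x z. B (c *\<^sub>R x) z = c * B x z"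
    and sym: "\<And>x y. B x y = B y x"
  shows "subspace W \<Longrightarrow> (\<And>U. subspace U \<Longrightarrow> U \<subseteq> W \<Longrightarrow> (\<forall>u\<in>U. B u u \<le> 0) \<Longrightarrow> dim U \<le> c)
     \<Longrightarrow> \<exists>G. subspace G \<and> G \<subseteq> W \<and> dim W \<le> dim G + c \<and> (\<forall>g\<in>G. g \<noteq> 0 \<longrightarrow> B g g > 0)"
proof (induction "dim W" arbitrary: W rule: less_induct)
  case (less W)
  show ?case
  proof (cases "\<forall>u\<in>W. B u u \<le> 0")
    case True
    then have "dim W \<le> c" using less.prems by auto
    then show ?thesis by (intro exI[of _ "{0}"]) (auto simp: subspace_0 less.prems)
  next
    case False
    then obtain u0 where u0: "u0 \<in> W" "B u0 u0 > 0" by force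
    have B0: "B 0 z = 0" for z using scl[of 0 z z] by simp
    have sub_ker: "subspace {x. B x u0 = 0}"
      unfolding subspace_def using add scl B0 by auto
    define W' where "W' = W \<inter> {x. B x u0 = 0}"
    have subW': "subspace W'" unfolding W'_def using less.prems(1) sub_ker
      by (metis subspace_inter)
    have W'W: "W' \<subseteq> W" unfolding W'_def by auto
    have u0W': "u0 \<notin> W'" using u0 unfolding W'_def by auto
    have "span W' \<subset> span W"
    proof -
      have e1: "span W' = W'" using subW' by simp
      have e2: "span W = W" using less.prems(1) by simp
      show ?thesis unfolding e1 e2 using W'W u0W' u0(1) by blast
    qed
    then have dlt: "dim W' < dim W" by (rule dim_psubset)
    obtain G' where G': "subspace G'" "G' \<subseteq> W'" "dim W' \<le> dim G' + c"
        "\<forall>g\<in>G'. g \<noteq> 0 \<longrightarrow> B g g > 0"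
      using less.hyps[OF dlt subW'] less.prems(2) W'W by (meson order_trans)
    define L where "L = span {u0}"
    have subL: "subspace L" unfolding L_def by simp
    have u0ne: "u0 \<noteq> 0" using u0 B0 by auto
    have dimL: "dim L = 1" unfolding L_def using u0ne by simp
    have Lmem: "y \<in> L \<longleftrightarrow> (\<exists>t. y = t *\<^sub>R u0)" for y
      unfolding L_def span_singleton by auto
    have LW: "L \<subseteq> W" unfolding L_def using u0(1) less.prems(1)
      by (metis empty_subsetI insert_subset span_eq_iff span_mono)
    have Wsub: "W \<subseteq> {x + y |x y. x \<in> W' \<and> y \<in> L}"
    proof
      fix x assume xW: "x \<in> W"
      define t where "t = B x u0 / B u0 u0"
      have "B (x - t *\<^sub>R u0) u0 = 0"
        using add[of x "- (t *\<^sub>R u0)" u0] scl[of "-t" u0 u0] u0(2)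
        by (simp add: t_def)
      moreover have "x - t *\<^sub>R u0 \<in> W" using xW u0(1) less.prems(1)
        by (simp add: subspace_diff subspace_scale)
      ultimately have "x - t *\<^sub>R u0 \<in> W'" unfolding W'_def by auto
      moreover have "t *\<^sub>R u0 \<in> L" using Lmem by auto
      ultimately show "x \<in> {x + y |x y. x \<in> W' \<and> y \<in> L}"
        by (metis (mono_tags, lifting) diff_add_cancel mem_Collect_eq)
    qed
    have "dim W \<le> dim {x + y |x y. x \<in> W' \<and> y \<in> L}" using Wsub by (rule dim_subset)
    also have "\<dots> \<le> dim W' + 1" using dim_sums_Int[OF subW' subL] dimL by linarith
    finally have dW: "dim W \<le> dim W' + 1" .
    define G where "G = {x + y |x y. x \<in> G' \<and> y \<in> L}"
    have subG: "subspace G" unfolding G_def using subspace_sums[OF G'(1) subL] .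
    have GW: "G \<subseteq> W" unfolding G_def using G'(2) W'W LW less.prems(1)
      by (auto intro!: subspace_add)
    have GL0: "G' \<inter> L \<subseteq> {0}"
    proof
      fix x assume x: "x \<in> G' \<inter> L"
      then obtain t where t: "x = t *\<^sub>R u0" using Lmem by auto
      have "x \<in> W'" using x G'(2) by auto
      then have "t * B u0 u0 = 0" using t scl unfolding W'_def by auto
      then have "t = 0" using u0(2) by auto
      then show "x \<in> {0}" using t by simp
    qed
    have "dim G + dim (G' \<inter> L) = dim G' + dim L"
      unfolding G_def by (rule dim_sums_Int[OF G'(1) subL])
    moreover have "dim (G' \<inter> L) = 0" using GL0 by (simp only: dim_eq_0)
    ultimately have dG: "dim G = dim G' + 1" using dimL by simp
    have pos: "\<forall>g\<in>G. g \<noteq> 0 \<longrightarrow> B g g > 0"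
    proof (intro ballI impI)
      fix g assume gG: "g \<in> G" and g0: "g \<noteq> 0"
      then obtain x y where xy: "g = x + y" "x \<in> G'" "y \<in> L"
        unfolding G_def by blast
      then obtain t where "y = t *\<^sub>R u0" using Lmem by blast
      then have xt: "g = x + t *\<^sub>R u0" "x \<in> G'" using xy by auto
      have xker: "B x u0 = 0" using xt(2) G'(2) unfolding W'_def by auto
      have "B g g = B x x + t * B u0 x + t * (B x u0 + t * B u0 u0)"
        unfolding xt(1) using add scl sym by (simp add: algebra_simps)
      also have "\<dots> = B x x + t * t * B u0 u0" using xker sym[of u0 x] by (simp add: algebra_simps)
      finally have eq: "B g g = B x x + t * t * B u0 u0" .
      have bx: "B x x \<ge> 0" using G'(4) xt(2) B0 by (cases "x = 0") (auto intro: less_imp_le)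
      have tt: "t * t * B u0 u0 \<ge> 0" using u0(2) by simp
      show "B g g > 0"
      proof (cases "x = 0")
        case True
        then have "t \<noteq> 0" using g0 xt(1) by auto
        then have "t * t > 0" by (metis not_real_square_gt_zero)
        then have "t * t * B u0 u0 > 0" using u0(2) by (rule mult_pos_pos)
        then show ?thesis using eq bx by linarith
      next
        case False
        then have "B x x > 0" using G'(4) xt(2) by auto
        then show ?thesis using eq tt by linarith
      qed
    qed
    show ?thesis
      using subG GW dG dW G'(3) pos by (intro exI[of _ G]) auto
  qed
qed



context onb begin

lemma zero_coords: "(\<And>l. l < d \<Longrightarrow> x \<bullet> e l = 0) \<Longrightarrow> x = 0"
  by (subst expand) simp

lemma sq_nonneg: "sq A x \<ge> 0"
  unfolding sq_def by (simp add: sum_nonneg)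

lemma sq_zero: "finite A \<Longrightarrow> sq A x \<le> 0 \<Longrightarrow> l \<in> A \<Longrightarrow> x \<bullet> e l = 0"
proof -
  assume "finite A" "sq A x \<le> 0" "l \<in> A"
  then have "(x \<bullet> e l)^2 \<le> sq A x" unfolding sq_def by (intro member_le_sum) auto
  then have "(x \<bullet> e l)^2 \<le> 0" using \<open>sq A x \<le> 0\<close> by linarith
  then show ?thesis by simp
qed

lemma sq_0[simp]: "sq A 0 = 0" unfolding sq_def by simp

definition cone :: "nat \<Rightarrow> real \<Rightarrow> 'a \<Rightarrow> bool" where
  "cone j s x \<longleftrightarrow> sq {..<j} x \<le> s * sq {j..<d} x"

definition goodU :: "'a set \<Rightarrow> nat \<Rightarrow> real \<Rightarrow> 'a set \<Rightarrow> bool" where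
  "goodU W j s U \<longleftrightarrow> subspace U \<and> U \<subseteq> W \<and> (\<forall>u\<in>U. cone j s u)"

definition cnt :: "'a set \<Rightarrow> nat \<Rightarrow> real \<Rightarrow> nat" where
  "cnt W j s = Max {dim U | U. goodU W j s U}"

lemma cnt_set: assumes "subspace W"
  shows "finite {dim U | U. goodU W j s U}" "{dim U | U. goodU W j s U} \<noteq> {}"
proof -
  have "{dim U | U. goodU W j s U} \<subseteq> {..dim W}"
    by (auto simp: goodU_def intro: dim_subset)
  then show "finite {dim U | U. goodU W j s U}" by (rule finite_subset) simp
  have "goodU W j s {0}" using assms by (auto simp: goodU_def cone_def subspace_0)
  then show "{dim U | U. goodU W j s U} \<noteq> {}" by blast
qed

lemma cnt_ge: "subspace W \<Longrightarrow> goodU W j s U \<Longrightarrow> dim U \<le> cnt W j s"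
  unfolding cnt_def using cnt_set by (intro Max_ge) auto

lemma cnt_ex: "subspace W \<Longrightarrow> \<exists>U. goodU W j s U \<and> dim U = cnt W j s"
proof -
  assume W: "subspace W"
  have "cnt W j s \<in> {dim U | U. goodU W j s U}"
    unfolding cnt_def using cnt_set[OF W] by (rule Max_in)
  then show ?thesis by auto
qed

lemma cnt_le_dim: "subspace W \<Longrightarrow> cnt W j s \<le> dim W"
  using cnt_ex[of W j s] by (metis goodU_def dim_subset)

lemma cnt_mono: assumes W: "subspace W" and ss: "s \<le> s'" shows "cnt W j s \<le> cnt W j s'"
proof -
  obtain U where U: "goodU W j s U" "dim U = cnt W j s" using cnt_ex[OF W] by blast
  have "goodU W j s' U" using U(1) unfolding goodU_def cone_def
    using mult_right_mono[OF ss sq_nonneg] order_trans by blast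
  then show ?thesis using cnt_ge[OF W] U(2) by metis
qed

lemma proj_in_span: "proj A x \<in> span (e ` A)"
  unfolding proj_def by (intro span_sum span_scale span_base) auto

lemma linear_proj: "linear (proj A)"
  unfolding proj_def
  by (rule linearI) (simp_all add: inner_add_left scaleR_add_left sum.distrib scaleR_sum_right)

lemma cnt_upper: assumes W: "subspace W" and jd: "j \<le> d" shows "cnt W j s \<le> d - j"
proof -
  obtain U where U: "goodU W j s U" "dim U = cnt W j s" using cnt_ex[OF W] by blast
  have subU: "subspace U" using U(1) by (simp add: goodU_def)
  let ?f = "proj {j..<d}"
  have Aj: "{j..<d} \<subseteq> {..<d}" by auto
  have z: "u = 0" if uU: "u \<in> U" and fu: "?f u = 0" for u
  proof -
    have c1: "u \<bullet> e l = 0" if "j \<le> l" "l < d" for l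
      using proj_coord[OF Aj, of l u] fu that by simp
    then have "sq {j..<d} u = 0" unfolding sq_def by simp
    then have "sq {..<j} u \<le> 0" using U(1) uU unfolding goodU_def cone_def by auto
    then have c2: "u \<bullet> e l = 0" if "l < j" for l using sq_zero[of "{..<j}"] that by auto
    show "u = 0" by (rule zero_coords) (metis c1 c2 not_le)
  qed
  have inj: "inj_on ?f (span U)"
  proof (rule inj_onI)
    fix x y assume "x \<in> span U" "y \<in> span U" "?f x = ?f y"
    moreover have "span U = U" using subU by simp
    ultimately have "x - y \<in> U" "?f (x - y) = 0"
      using subU linear_diff[OF linear_proj] by (auto simp: subspace_diff)
    then show "x = y" using z by (metis eq_iff_diff_eq_0)
  qed
  have "dim U = dim (?f ` U)" using dim_image_eq[OF linear_proj inj] by simp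
  also have "\<dots> \<le> card (e ` {j..<d})"
    by (rule dim_le_card) (auto intro: proj_in_span)
  also have "\<dots> \<le> d - j" using card_image_le[of "{j..<d}" e] by simp
  finally show ?thesis using U(2) by simp
qed

lemma coord_span_zero: "x \<in> span (e ` A) \<Longrightarrow> A \<subseteq> {..<d} \<Longrightarrow> l < d \<Longrightarrow> l \<notin> A \<Longrightarrow> x \<bullet> e l = 0"
proof -
  assume x: "x \<in> span (e ` A)" and A: "A \<subseteq> {..<d}" and l: "l < d" "l \<notin> A"
  have "orthogonal (e l) x"
    by (rule orthogonal_to_span[OF x]) (use A l on in \<open>auto simp: orthogonal_def\<close>)
  then show ?thesis by (simp add: orthogonal_def inner_commute)
qed

lemma cnt_lower: assumes W: "subspace W" and jd: "j \<le> d" and s: "0 \<le> s"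
  shows "dim W - j \<le> cnt W j s"
proof -
  define E where "E = span (e ` {j..<d})"
  have subE: "subspace E" unfolding E_def by simp
  have dE: "dim E = d - j" unfolding E_def by (subst dim_span_e) auto
  have g: "goodU W j s (W \<inter> E)"
    unfolding goodU_def
  proof (intro conjI ballI)
    show "subspace (W \<inter> E)" using W subE by (metis subspace_inter)
    show "W \<inter> E \<subseteq> W" by auto
    fix u assume "u \<in> W \<inter> E"
    then have "u \<bullet> e l = 0" if "l < j" for l
      using coord_span_zero[of u "{j..<d}" l] that jd unfolding E_def by fastforce
    then have "sq {..<j} u = 0" unfolding sq_def by simp
    then show "cone j s u" unfolding cone_def using s sq_nonneg by simp
  qed
  have "dim {x + y |x y. x \<in> W \<and> y \<in> E} + dim (W \<inter> E) = dim W + dim E"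
    by (rule dim_sums_Int[OF W subE])
  moreover have "dim {x + y |x y. x \<in> W \<and> y \<in> E} \<le> d"
    using dim_subset_UNIV[of "{x + y |x y. x \<in> W \<and> y \<in> E}"] d_eq by simp
  ultimately have "dim W - j \<le> dim (W \<inter> E)" using dE jd by linarith
  then show ?thesis using cnt_ge[OF W g] by linarith
qed

definition D :: "(nat \<Rightarrow> real) \<Rightarrow> 'a \<Rightarrow> 'a" where
  "D \<mu> x = (\<Sum>l<d. (\<mu> l * (x \<bullet> e l)) *\<^sub>R e l)"

lemma linear_D: "linear (D \<mu>)"
  unfolding D_def
  by (rule linearI) (simp_all add: inner_add_left distrib_left scaleR_add_left sum.distrib scaleR_sum_right mult.left_commute)

lemma D_coord: "l < d \<Longrightarrow> D \<mu> x \<bullet> e l = \<mu> l * (x \<bullet> e l)"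
  unfolding D_def by (subst inner_sum_e) auto

lemma D_inv: assumes "\<And>l. l < d \<Longrightarrow> \<mu> l \<noteq> 0"
  shows "D (\<lambda>l. 1 / \<mu> l) (D \<mu> x) = x"
proof -
  have "D (\<lambda>l. 1 / \<mu> l) (D \<mu> x) = (\<Sum>l<d. (x \<bullet> e l) *\<^sub>R e l)"
    unfolding D_def[of "\<lambda>l. 1 / \<mu> l"] using assms by (intro sum.cong) (auto simp: D_coord)
  then show ?thesis using expand[of x] by simp
qed

lemma sq_D: "A \<subseteq> {..<d} \<Longrightarrow> sq A (D \<mu> x) = (\<Sum>l\<in>A. (\<mu> l)^2 * (x \<bullet> e l)^2)"
  unfolding sq_def by (intro sum.cong) (auto simp: D_coord power_mult_distrib)

lemma cnt_step:
  assumes W: "subspace W" and jd: "j \<le> d" and R: "R > 0" and q: "q > 0"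
    and mu: "\<And>l. l < d \<Longrightarrow> \<mu> l > 0"
    and lo: "\<And>l. l < j \<Longrightarrow> R * q \<le> \<mu> l"
    and hi: "\<And>l. j \<le> l \<Longrightarrow> l < d \<Longrightarrow> \<mu> l \<le> q"
    and s: "s \<ge> 0"
  shows "cnt (D \<mu> ` W) j s \<le> cnt W j (s / R^2)"
proof -
  have W2: "subspace (D \<mu> ` W)" using linear_subspace_image[OF linear_D W] .
  obtain U where U: "goodU (D \<mu> ` W) j s U" "dim U = cnt (D \<mu> ` W) j s" using cnt_ex[OF W2] by blast
  let ?g = "D (\<lambda>l. 1 / \<mu> l)"
  have inv1: "?g (D \<mu> x) = x" for x using D_inv mu by (metis less_irrefl)
  have inv2: "D \<mu> (?g x) = x" for x
  proof -
    have "D (\<lambda>l. 1 / (1 / \<mu> l)) (?g x) = x" using D_inv[of "\<lambda>l. 1 / \<mu> l"] mu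
      by (metis less_irrefl one_divide_eq_0_iff)
    then show ?thesis by simp
  qed
  have subU: "subspace U" and UW: "U \<subseteq> D \<mu> ` W" and cU: "\<forall>u\<in>U. cone j s u"
    using U(1) by (auto simp: goodU_def)
  have good: "goodU W j (s / R^2) (?g ` U)"
    unfolding goodU_def
  proof (intro conjI ballI)
    show "subspace (?g ` U)" using linear_subspace_image[OF linear_D subU] .
    show "?g ` U \<subseteq> W" using UW inv1 by auto
    fix v assume "v \<in> ?g ` U"
    then obtain u where u: "u \<in> U" "v = ?g u" by auto
    have Dv: "D \<mu> v = u" using u inv2 by simp
    have c: "sq {..<j} (D \<mu> v) \<le> s * sq {j..<d} (D \<mu> v)" using cU u Dv unfolding cone_def by auto
    have A1: "{..<j} \<subseteq> {..<d}" "{j..<d} \<subseteq> {..<d}" using jd by auto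
    have "(R*q)^2 * sq {..<j} v \<le> sq {..<j} (D \<mu> v)"
      unfolding sq_D[OF A1(1)] unfolding sq_def sum_distrib_left
    proof (rule sum_mono)
      fix l assume "l \<in> {..<j}"
      then have "R * q \<le> \<mu> l" using lo by auto
      then have "(R*q)^2 \<le> (\<mu> l)^2" using R q by (intro power_mono) auto
      then show "(R*q)^2 * (v \<bullet> e l)^2 \<le> (\<mu> l)^2 * (v \<bullet> e l)^2" by (simp add: mult_right_mono)
    qed
    moreover have "sq {j..<d} (D \<mu> v) \<le> q^2 * sq {j..<d} v"
      unfolding sq_D[OF A1(2)] unfolding sq_def sum_distrib_left
    proof (rule sum_mono)
      fix l assume "l \<in> {j..<d}"
      then have "\<mu> l \<le> q" "\<mu> l > 0" using hi mu by auto
      then have "(\<mu> l)^2 \<le> q^2" by (intro power_mono) auto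
      then show "(\<mu> l)^2 * (v \<bullet> e l)^2 \<le> q^2 * (v \<bullet> e l)^2" by (simp add: mult_right_mono)
    qed
    ultimately have "(R*q)^2 * sq {..<j} v \<le> s * (q^2 * sq {j..<d} v)"
      using c s by (meson mult_left_mono order_trans)
    then have "q^2 * (R^2 * sq {..<j} v) \<le> q^2 * (s * sq {j..<d} v)"
      by (simp add: power_mult_distrib algebra_simps)
    then have "R^2 * sq {..<j} v \<le> s * sq {j..<d} v" using q by simp
    then show "cone j (s / R^2) v" unfolding cone_def using R
      by (simp add: field_simps)
  qed
  have inj: "inj_on ?g (span U)"
  proof (rule inj_on_inverseI[where g="D \<mu>"])
    fix x show "D \<mu> (?g x) = x" by (rule inv2)
  qed
  have "dim (?g ` U) = dim U" using dim_image_eq[OF linear_D inj] .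
  then show ?thesis using cnt_ge[OF W good] U(2) by simp
qed

end


context onb begin

lemma sq_Suc_lt: "sq {..<Suc j} u = sq {..<j} u + (u \<bullet> e j)^2"
  unfolding sq_def by simp

lemma sq_split_hi: "j < d \<Longrightarrow> sq {j..<d} u = (u \<bullet> e j)^2 + sq {Suc j..<d} u"
  unfolding sq_def by (simp add: sum.atLeast_Suc_lessThan)

lemma sq_minus: assumes "j < d" shows "sq ({..<d} - {j}) u = sq {..<j} u + sq {Suc j..<d} u"
proof -
  have h: "{..<d} - {j} = {..<j} \<union> {Suc j..<d}" using assms by auto
  show ?thesis unfolding sq_def h by (rule sum.union_disjoint) auto
qed

lemma sq_mono_set: "A \<subseteq> B \<Longrightarrow> finite B \<Longrightarrow> sq A u \<le> sq B u"
  unfolding sq_def by (rule sum_mono2) auto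

lemma cone_mono_j: assumes "j < d" "cone (Suc j) s u" "s \<ge> 0" shows "cone j s u"
proof -
  have "sq {..<j} u \<le> sq {..<Suc j} u" by (rule sq_mono_set) auto
  also have "\<dots> \<le> s * sq {Suc j..<d} u" using assms(2) by (simp add: cone_def)
  also have "\<dots> \<le> s * sq {j..<d} u" using assms(3) by (intro mult_left_mono sq_mono_set) auto
  finally show ?thesis by (simp add: cone_def)
qed

lemma telescope: "(\<And>j. j < n \<Longrightarrow> c (Suc j) \<le> (c j :: nat)) \<Longrightarrow> (\<Sum>j<n. c j - c (Suc j)) = c 0 - c n \<and> c n \<le> c 0"
proof (induction n)
  case 0
  then show ?case by simp
next
  case (Suc n)
  then have IH: "(\<Sum>j<n. c j - c (Suc j)) = c 0 - c n" "c n \<le> c 0" by auto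
  have "c (Suc n) \<le> c n" using Suc.prems by auto
  moreover have "(\<Sum>j<Suc n. c j - c (Suc j)) = (\<Sum>j<n. c j - c (Suc j)) + (c n - c (Suc n))" by simp
  ultimately show ?case using IH by linarith
qed

lemma gap:
  assumes W: "subspace W" and kd: "dim W \<le> d" and rho: "\<rho> > 1"
    and eq: "\<And>j. 1 \<le> j \<Longrightarrow> j < d \<Longrightarrow> cnt W j (1/\<rho>) = cnt W j \<rho>"
  shows "\<exists>K f. K \<subseteq> {..<d} \<and> card K = dim W \<and>
     (\<forall>j\<in>K. f j \<in> W \<and> f j \<noteq> 0 \<and> (\<rho> - 1) * sq ({..<d} - {j}) (f j) \<le> 2 * (f j \<bullet> e j)^2)"
proof -
  define k where "k = dim W"
  define c where "c j = cnt W j \<rho>" for j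
  have r0: "0 \<le> 1/\<rho>" "0 \<le> \<rho>" using rho by auto
  have c0: "c 0 = k"
  proof -
    have "dim W - 0 \<le> c 0" using cnt_lower[OF W _ r0(2), of 0] unfolding c_def by simp
    moreover have "c 0 \<le> dim W" unfolding c_def by (rule cnt_le_dim[OF W])
    ultimately show ?thesis unfolding k_def by simp
  qed
  have cd: "c d = 0" using cnt_upper[OF W, of d] unfolding c_def by simp
  have eq': "cnt W j (1/\<rho>) = c j" if "j \<le> d" for j
  proof (cases "j = 0 \<or> j = d")
    case True
    then show ?thesis
    proof
      assume "j = 0"
      then show ?thesis using cnt_lower[OF W _ r0(1), of 0] cnt_le_dim[OF W, of 0 "1/\<rho>"] c0 k_def by simp
    next
      assume "j = d"
      then show ?thesis using cnt_upper[OF W, of d "1/\<rho>"] cd by simp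
    qed
  next
    case False
    then show ?thesis using eq[of j] that unfolding c_def by simp
  qed
  have "\<forall>j. \<exists>U. goodU W j (1/\<rho>) U \<and> dim U = cnt W j (1/\<rho>)" using cnt_ex[OF W] by blast
  then obtain S where S: "\<And>j. goodU W j (1/\<rho>) (S j) \<and> dim (S j) = cnt W j (1/\<rho>)" by metis
  have Gex: "\<exists>G. subspace G \<and> G \<subseteq> W \<and> dim W \<le> dim G + c j \<and>
      (\<forall>g\<in>G. g \<noteq> 0 \<longrightarrow> sq {..<j} g > \<rho> * sq {j..<d} g)" for j
  proof -
    define B where "B x y = (\<Sum>i<j. (x \<bullet> e i) * (y \<bullet> e i)) - \<rho> * (\<Sum>i\<in>{j..<d}. (x \<bullet> e i) * (y \<bullet> e i))" for x y
    have BB: "B x x = sq {..<j} x - \<rho> * sq {j..<d} x" for x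
      unfolding B_def sq_def by (simp add: power2_eq_square)
    have "\<exists>G. subspace G \<and> G \<subseteq> W \<and> dim W \<le> dim G + c j \<and> (\<forall>g\<in>G. g \<noteq> 0 \<longrightarrow> B g g > 0)"
    proof (rule inertia[of B W "c j"])
      show "B (x + y) z = B x z + B y z" for x y z
        unfolding B_def by (simp add: inner_add_left distrib_right sum.distrib algebra_simps)
      show "B (a *\<^sub>R x) z = a * B x z" for a x z
        unfolding B_def by (simp add: sum_distrib_left algebra_simps)
      show "B x y = B y x" for x y unfolding B_def by (simp add: mult.commute)
      show "subspace W" by (rule W)
      fix U assume "subspace U" "U \<subseteq> W" "\<forall>u\<in>U. B u u \<le> 0"
      then have "goodU W j \<rho> U" unfolding goodU_def cone_def BB by auto
      then show "dim U \<le> c j" unfolding c_def by (rule cnt_ge[OF W])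
    qed
    then show ?thesis using BB by auto
  qed
  then obtain G where G: "\<And>j. subspace (G j) \<and> G j \<subseteq> W \<and> dim W \<le> dim (G j) + c j \<and>
      (\<forall>g\<in>G j. g \<noteq> 0 \<longrightarrow> sq {..<j} g > \<rho> * sq {j..<d} g)" by metis
  have cmono: "c (Suc j) \<le> c j" if jd: "j < d" for j
  proof -
    have "goodU W j (1/\<rho>) (S (Suc j))"
      using S[of "Suc j"] cone_mono_j[OF jd _ r0(1)] unfolding goodU_def by auto
    then have "dim (S (Suc j)) \<le> cnt W j (1/\<rho>)" by (rule cnt_ge[OF W])
    then show ?thesis using S[of "Suc j"] eq'[of j] eq'[of "Suc j"] jd by simp
  qed
  define I where "I j = S j \<inter> G (Suc j)" for j
  have Ilow: "c j - c (Suc j) \<le> dim (I j)" if jd: "j < d" for j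
  proof -
    have sS: "subspace (S j)" and SW: "S j \<subseteq> W" using S[of j] unfolding goodU_def by auto
    have sG: "subspace (G (Suc j))" and GW: "G (Suc j) \<subseteq> W" using G by auto
    have "dim {x + y |x y. x \<in> S j \<and> y \<in> G (Suc j)} + dim (I j) = dim (S j) + dim (G (Suc j))"
      unfolding I_def by (rule dim_sums_Int[OF sS sG])
    moreover have "dim {x + y |x y. x \<in> S j \<and> y \<in> G (Suc j)} \<le> dim W"
      using SW GW W by (intro dim_subset) (auto intro: subspace_add)
    moreover have "dim (S j) = c j" using S[of j] eq'[of j] jd by simp
    ultimately show ?thesis using G[of "Suc j"] by linarith
  qed
  have Iprop: "\<rho> * sq {..<j} u \<le> (u \<bullet> e j)^2 + sq {Suc j..<d} u \<and>
               (u \<noteq> 0 \<longrightarrow> \<rho> * sq {Suc j..<d} u < sq {..<j} u + (u \<bullet> e j)^2)"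
    if jd: "j < d" and uI: "u \<in> I j" for j u
  proof
    have "cone j (1/\<rho>) u" using S[of j] uI unfolding I_def goodU_def by auto
    then have "sq {..<j} u \<le> (1/\<rho>) * ((u \<bullet> e j)^2 + sq {Suc j..<d} u)"
      unfolding cone_def sq_split_hi[OF jd] .
    then show "\<rho> * sq {..<j} u \<le> (u \<bullet> e j)^2 + sq {Suc j..<d} u" using rho
      by (simp add: field_simps)
    show "u \<noteq> 0 \<longrightarrow> \<rho> * sq {Suc j..<d} u < sq {..<j} u + (u \<bullet> e j)^2"
      using G[of "Suc j"] uI unfolding I_def sq_Suc_lt by auto
  qed
  have Iup: "dim (I j) \<le> 1" if jd: "j < d" for j
  proof -
    have sI: "subspace (I j)" unfolding I_def using S[of j] G[of "Suc j"]
      unfolding goodU_def by (metis subspace_inter)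
    let ?f = "proj {j}"
    have z: "u = 0" if uI: "u \<in> I j" and fu: "?f u = 0" for u
    proof (rule ccontr)
      assume u0: "u \<noteq> 0"
      have "u \<bullet> e j = 0" using fu proj_coord[of "{j}" j u] jd by simp
      then have a: "\<rho> * sq {..<j} u \<le> sq {Suc j..<d} u" and b: "\<rho> * sq {Suc j..<d} u < sq {..<j} u"
        using Iprop[OF jd uI] u0 by auto
      have "\<rho> * (\<rho> * sq {Suc j..<d} u) \<le> \<rho> * sq {..<j} u" using b rho by simp
      then have "\<rho> * \<rho> * sq {Suc j..<d} u \<le> sq {Suc j..<d} u" using a by simp
      moreover have "sq {Suc j..<d} u \<ge> 0" by (rule sq_nonneg)
      moreover have "\<rho> * \<rho> > 1" using rho by (metis less_1_mult)
      ultimately have "sq {Suc j..<d} u = 0"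
      proof -
        assume h: "\<rho> * \<rho> * sq {Suc j..<d} u \<le> sq {Suc j..<d} u" "sq {Suc j..<d} u \<ge> 0" "\<rho> * \<rho> > 1"
        show ?thesis
        proof (rule ccontr)
          assume "sq {Suc j..<d} u \<noteq> 0"
          then have "sq {Suc j..<d} u > 0" using h(2) by linarith
          then have "1 * sq {Suc j..<d} u < \<rho> * \<rho> * sq {Suc j..<d} u"
            using h(3) by (intro mult_strict_right_mono) auto
          then show False using h(1) by simp
        qed
      qed
      then have h1: "\<rho> * sq {..<j} u \<le> 0" and h2: "sq {..<j} u > 0" using a b by auto
      have "\<rho> * sq {..<j} u > 0" using rho h2 by (intro mult_pos_pos) auto
      then show False using h1 by linarith
    qed
    have inj: "inj_on ?f (span (I j))"
    proof (rule inj_onI)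
      fix x y assume "x \<in> span (I j)" "y \<in> span (I j)" "?f x = ?f y"
      moreover have "span (I j) = I j" using sI by simp
      ultimately have "x - y \<in> I j" "?f (x - y) = 0"
        using sI linear_diff[OF linear_proj] by (auto simp: subspace_diff)
      then show "x = y" using z by (metis eq_iff_diff_eq_0)
    qed
    have "dim (I j) = dim (?f ` I j)" using dim_image_eq[OF linear_proj inj] by simp
    also have "\<dots> \<le> card (e ` {j})" by (rule dim_le_card) (use proj_in_span[of "{j}"] in auto)
    finally show ?thesis by simp
  qed
  have cstep: "c j \<le> c (Suc j) + 1" if "j < d" for j using Ilow[OF that] Iup[OF that] by linarith
  define K where "K = {j. j < d \<and> c (Suc j) < c j}"
  have Ksub: "K \<subseteq> {..<d}" unfolding K_def by auto
  have "(\<Sum>j<d. c j - c (Suc j)) = c 0 - c d" using telescope[of d c] cmono by blast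
  also have "\<dots> = k" using c0 cd by simp
  finally have s1: "(\<Sum>j<d. c j - c (Suc j)) = k" .
  have "(\<Sum>j<d. c j - c (Suc j)) = (\<Sum>j<d. if j \<in> K then 1 else 0)"
  proof (rule sum.cong)
    fix j assume "j \<in> {..<d}"
    then show "c j - c (Suc j) = (if j \<in> K then 1 else 0)"
      using cmono[of j] cstep[of j] unfolding K_def by auto
  qed simp
  also have "\<dots> = card K"
    using sum.inter_restrict[of "{..<d}" "\<lambda>_. (1::nat)" K] Ksub
    by (simp add: Int_absorb1)
  finally have cardK: "card K = k" using s1 by simp
  have "\<forall>j\<in>K. \<exists>u. u \<in> I j \<and> u \<noteq> 0"
  proof
    fix j assume "j \<in> K"
    then have "j < d" "dim (I j) \<ge> 1" using Ilow[of j] unfolding K_def by auto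
    then have "\<not> I j \<subseteq> {0}" using dim_eq_0[of "I j"] by linarith
    then show "\<exists>u. u \<in> I j \<and> u \<noteq> 0" by auto
  qed
  then obtain f where f: "\<And>j. j \<in> K \<Longrightarrow> f j \<in> I j \<and> f j \<noteq> 0" by metis
  have fprop: "f j \<in> W \<and> f j \<noteq> 0 \<and> (\<rho> - 1) * sq ({..<d} - {j}) (f j) \<le> 2 * (f j \<bullet> e j)^2"
    if jK: "j \<in> K" for j
  proof (intro conjI)
    have jd: "j < d" using jK Ksub by auto
    show "f j \<in> W" using f[OF jK] S[of j] unfolding I_def goodU_def by auto
    show "f j \<noteq> 0" using f[OF jK] by auto
    have a: "\<rho> * sq {..<j} (f j) \<le> (f j \<bullet> e j)^2 + sq {Suc j..<d} (f j)"
      and b: "\<rho> * sq {Suc j..<d} (f j) < sq {..<j} (f j) + (f j \<bullet> e j)^2"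
      using Iprop[OF jd, of "f j"] f[OF jK] by auto
    show "(\<rho> - 1) * sq ({..<d} - {j}) (f j) \<le> 2 * (f j \<bullet> e j)^2"
      unfolding sq_minus[OF jd] using a b by (simp add: algebra_simps)
  qed
  show ?thesis using Ksub cardK fprop k_def by blast
qed

end


context onb begin

lemma norm_sq_restrict: fixes a :: "nat \<Rightarrow> real" assumes "K \<subseteq> {..<d}"
  shows "(\<Sum>l<d. (if l \<in> K then a l else 0)^2) = (\<Sum>l\<in>K. (a l)^2)"
proof -
  have "(\<Sum>l<d. (if l \<in> K then a l else 0)^2) = (\<Sum>l<d. if l \<in> K then (a l)^2 else 0)"
    by (intro sum.cong) auto
  also have "\<dots> = (\<Sum>l\<in>{..<d} \<inter> K. (a l)^2)" by (simp add: sum.inter_restrict)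
  also have "{..<d} \<inter> K = K" using assms by auto
  finally show ?thesis .
qed

lemma combo:
  fixes \<alpha> :: "nat \<Rightarrow> real"
  assumes K: "K \<subseteq> {..<d}"
    and f: "\<And>j. j \<in> K \<Longrightarrow> f j \<noteq> 0 \<and> (\<rho> - 1) * sq ({..<d} - {j}) (f j) \<le> 2 * (f j \<bullet> e j)^2"
    and rho: "\<rho> > 1" and eta: "0 < \<eta>" "\<eta> \<le> 1" and keta: "8 * real (card K) \<le> (\<rho> - 1) * \<eta>"
  defines "v \<equiv> (\<Sum>j\<in>K. \<alpha> j *\<^sub>R f j)"
  shows "norm (v - proj K v)^2 \<le> \<eta> * norm v ^ 2 \<and> (v = 0 \<longrightarrow> (\<forall>j\<in>K. \<alpha> j = 0))"
proof -
  have finK: "finite K" using K finite_subset by blast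
  define x where "x j = f j \<bullet> e j" for j
  define g where "g j = f j - x j *\<^sub>R e j" for j
  define y where "y = (\<Sum>j\<in>K. (\<alpha> j * x j) *\<^sub>R e j)"
  define z where "z = (\<Sum>j\<in>K. \<alpha> j *\<^sub>R g j)"
  have vyz: "v = y + z"
    unfolding v_def y_def z_def g_def
    by (simp add: sum.distrib[symmetric] scaleR_diff_right algebra_simps)
  have gcoord: "g j \<bullet> e l = (if l = j then 0 else f j \<bullet> e l)" if "j < d" "l < d" for j l
    using that on unfolding g_def x_def by (auto simp: inner_diff_left)
  have ng: "norm (g j)^2 = sq ({..<d} - {j}) (f j)" if jd: "j < d" for j
  proof -
    have "norm (g j)^2 = (\<Sum>l<d. (g j \<bullet> e l)^2)" by (rule norm_sq)
    also have "\<dots> = (g j \<bullet> e j)^2 + (\<Sum>l\<in>{..<d} - {j}. (g j \<bullet> e l)^2)"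
      using jd by (subst sum.remove[of _ j]) auto
    also have "\<dots> = sq ({..<d} - {j}) (f j)"
      unfolding sq_def using gcoord jd by (auto intro!: sum.cong)
    finally show ?thesis .
  qed
  have gb: "(\<rho> - 1) * norm (g j)^2 \<le> 2 * (x j)^2" if "j \<in> K" for j
    using f[OF that] ng[of j] K that unfolding x_def by auto
  have ycoord: "y \<bullet> e l = (if l \<in> K then \<alpha> l * x l else 0)" if "l < d" for l
    unfolding y_def using inner_sum_e[OF that K] .
  have ny: "norm y ^2 = (\<Sum>j\<in>K. (\<alpha> j * x j)^2)"
    unfolding norm_sq using ycoord norm_sq_restrict[OF K, of "\<lambda>l. \<alpha> l * x l"] by simp
  have "norm z \<le> (\<Sum>j\<in>K. norm (\<alpha> j *\<^sub>R g j))" unfolding z_def by (rule norm_sum)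
  also have "\<dots> = (\<Sum>j\<in>K. \<bar>\<alpha> j\<bar> * norm (g j))" by simp
  finally have nz1: "norm z \<le> (\<Sum>j\<in>K. \<bar>\<alpha> j\<bar> * norm (g j))" .
  have "norm z ^2 \<le> (\<Sum>j\<in>K. \<bar>\<alpha> j\<bar> * norm (g j))^2"
    using nz1 by (intro power_mono) auto
  also have "\<dots> \<le> (\<Sum>j\<in>K. (\<bar>\<alpha> j\<bar> * norm (g j))^2) * card K"
    by (rule sum_squared_le_sum_of_squares)
  also have "\<dots> \<le> (\<Sum>j\<in>K. (2 / (\<rho> - 1)) * (\<alpha> j * x j)^2) * card K"
  proof (intro mult_right_mono sum_mono)
    fix j assume jK: "j \<in> K"
    have A: "(\<alpha> j)^2 * ((\<rho> - 1) * norm (g j)^2) \<le> (\<alpha> j)^2 * (2 * (x j)^2)"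
      by (rule mult_left_mono[OF gb[OF jK]]) simp
    have "(\<alpha> j)^2 * norm (g j)^2 \<le> (2 * ((\<alpha> j)^2 * (x j)^2)) / (\<rho> - 1)"
      using A rho by (subst pos_le_divide_eq) (auto simp: mult_ac)
    then have "(\<alpha> j)^2 * norm (g j)^2 \<le> (2 / (\<rho> - 1)) * ((\<alpha> j)^2 * (x j)^2)"
      by simp
    then show "(\<bar>\<alpha> j\<bar> * norm (g j))^2 \<le> (2 / (\<rho> - 1)) * (\<alpha> j * x j)^2"
      by (simp add: power_mult_distrib)
  qed simp
  also have "\<dots> = (2 * real (card K) / (\<rho> - 1)) * norm y ^ 2"
    unfolding ny by (simp add: sum_distrib_left[symmetric] sum_divide_distrib[symmetric] field_simps)
  also have "\<dots> \<le> (\<eta> / 4) * norm y ^ 2"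
  proof (rule mult_right_mono)
    show "2 * real (card K) / (\<rho> - 1) \<le> \<eta> / 4" using keta rho by (simp add: field_simps)
  qed simp
  finally have nz2: "norm z ^ 2 \<le> (\<eta> / 4) * norm y ^ 2" .
  define t where "t = sqrt \<eta>"
  have t1: "0 < t" unfolding t_def using eta by simp
  have t2: "t \<le> 1" unfolding t_def using eta by simp
  have t3: "t^2 = \<eta>" unfolding t_def using eta by simp
  note t = t1 t2 t3
  have "norm z ^ 2 \<le> (t / 2 * norm y)^2" using nz2 t(3) by (simp add: power_mult_distrib power_divide)
  moreover have "0 \<le> t / 2 * norm y" using t1 by simp
  ultimately have nz3: "norm z \<le> t / 2 * norm y" by (rule power2_le_imp_le)
  have yv: "y = v - z" using vyz by simp
  have "norm y \<le> norm v + norm z" unfolding yv by (rule norm_triangle_ineq4)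
  moreover have "t/2 * norm y \<le> 1/2 * norm y" using t2 by (intro mult_right_mono) simp_all
  ultimately have "norm y \<le> norm v + norm y / 2" using nz3 by linarith
  then have ny2: "norm y \<le> 2 * norm v" by linarith
  have "t/2 * norm y \<le> t/2 * (2 * norm v)" using ny2 t by (intro mult_left_mono) auto
  then have nz4: "norm z \<le> t * norm v" using nz3 by simp
  have pcoord: "(v - proj K v) \<bullet> e l = (if l \<in> K then 0 else z \<bullet> e l)" if "l < d" for l
    using proj_coord[OF K that, of v] ycoord[OF that] vyz by (auto simp: inner_diff_left inner_add_left)
  have "norm (v - proj K v)^2 = (\<Sum>l<d. (if l \<in> K then 0 else z \<bullet> e l)^2)"
    unfolding norm_sq using pcoord by simp
  also have "\<dots> \<le> (\<Sum>l<d. (z \<bullet> e l)^2)" by (intro sum_mono) auto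
  also have "\<dots> = norm z ^2" by (simp add: norm_sq)
  also have "\<dots> \<le> (t * norm v)^2" using nz4 by (intro power_mono) auto
  also have "\<dots> = \<eta> * norm v ^ 2" using t by (simp add: power_mult_distrib)
  finally have part1: "norm (v - proj K v)^2 \<le> \<eta> * norm v ^ 2" .
  have part2: "\<forall>j\<in>K. \<alpha> j = 0" if v0: "v = 0"
  proof
    fix j assume jK: "j \<in> K"
    have jd: "j < d" using jK K by auto
    have "norm y = 0" using ny2 v0 by simp
    then have "y \<bullet> e j = 0" by simp
    then have ax: "\<alpha> j * x j = 0" using ycoord[OF jd] jK by simp
    have "x j \<noteq> 0"
    proof
      assume x0: "x j = 0"
      then have h0: "(\<rho> - 1) * sq ({..<d} - {j}) (f j) \<le> 0" using f[OF jK] unfolding x_def by simp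
      have "sq ({..<d} - {j}) (f j) \<le> 0"
      proof (rule ccontr)
        assume "\<not> sq ({..<d} - {j}) (f j) \<le> 0"
        then have "(\<rho> - 1) * sq ({..<d} - {j}) (f j) > 0" using rho by (intro mult_pos_pos) auto
        then show False using h0 by linarith
      qed
      then have "f j \<bullet> e l = 0" if "l < d" "l \<noteq> j" for l using sq_zero[of "{..<d} - {j}"] that by auto
      then have "f j = 0" using x0 unfolding x_def by (metis zero_coords)
      then show False using f[OF jK] by simp
    qed
    then show "\<alpha> j = 0" using ax by simp
  qed
  show ?thesis using part1 part2 by blast
qed

lemma final_est:
  assumes K: "K \<subseteq> {..<d}" and W: "subspace W" and cK: "card K = dim W"
    and f: "\<And>j. j \<in> K \<Longrightarrow> f j \<in> W \<and> f j \<noteq> 0 \<and> (\<rho> - 1) * sq ({..<d} - {j}) (f j) \<le> 2 * (f j \<bullet> e j)^2"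
    and rho: "\<rho> > 1" and eta: "0 < \<eta>" "\<eta> \<le> 1" and keta: "8 * real (card K) \<le> (\<rho> - 1) * \<eta>"
    and vW: "v \<in> W"
  shows "norm (v - proj K v)^2 \<le> \<eta> * norm v ^ 2"
proof -
  have finK: "finite K" using K finite_subset by blast
  have f': "\<And>j. j \<in> K \<Longrightarrow> f j \<noteq> 0 \<and> (\<rho> - 1) * sq ({..<d} - {j}) (f j) \<le> 2 * (f j \<bullet> e j)^2"
    using f by blast
  note cmb = combo[OF K f' rho eta keta]
  have injf: "inj_on f K"
  proof (rule inj_onI)
    fix i j assume ij: "i \<in> K" "j \<in> K" "f i = f j"
    show "i = j"
    proof (rule ccontr)
      assume ne: "i \<noteq> j"
      define \<alpha> where "\<alpha> l = (if l = i then 1 else if l = j then -1 else (0::real))" for l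
      have "(\<Sum>l\<in>K. \<alpha> l *\<^sub>R f l) = (\<Sum>l\<in>{i,j}. \<alpha> l *\<^sub>R f l)"
        using ij finK by (intro sum.mono_neutral_right) (auto simp: \<alpha>_def)
      also have "\<dots> = 0" using ne ij by (simp add: \<alpha>_def)
      finally have "\<alpha> i = 0" using cmb[of \<alpha>] ij by blast
      then show False by (simp add: \<alpha>_def)
    qed
  qed
  have indep: "independent (f ` K)"
  proof
    assume "dependent (f ` K)"
    then obtain u where u: "\<exists>w\<in>f ` K. u w \<noteq> 0" "(\<Sum>w\<in>f ` K. u w *\<^sub>R w) = 0"
      using dependent_finite[of "f ` K"] finK by auto
    have "(\<Sum>j\<in>K. u (f j) *\<^sub>R f j) = 0" using u(2) sum.reindex[OF injf, of "\<lambda>w. u w *\<^sub>R w"] by simp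
    then have "\<forall>j\<in>K. u (f j) = 0" using cmb[of "\<lambda>j. u (f j)"] by blast
    then show False using u(1) by auto
  qed
  have fW: "f ` K \<subseteq> W" using f by auto
  have "card (f ` K) = dim W" using cK card_image[OF injf] by simp
  then have "W \<subseteq> span (f ` K)" using card_eq_dim[OF fW _ finite_imageI[OF finK]] indep by blast
  then have "v \<in> span (f ` K)" using vW by auto
  then obtain u where "v = (\<Sum>w\<in>f ` K. u w *\<^sub>R w)"
    using span_finite[OF finite_imageI[OF finK]] by auto
  then have "v = (\<Sum>j\<in>K. u (f j) *\<^sub>R f j)" using sum.reindex[OF injf, of "\<lambda>w. u w *\<^sub>R w"] by simp
  then show ?thesis using cmb[of "\<lambda>j. u (f j)"] by simp
qed

end


lemma rev_split: "n \<ge> 1 \<Longrightarrow> (\<Sum>j\<in>{1..<Suc n}. g (Suc n - j)) = (g n :: nat) + (\<Sum>j\<in>{1..<n}. g (n - j))"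
proof -
  assume n: "n \<ge> 1"
  have "(\<Sum>j\<in>{1..<Suc n}. g (Suc n - j)) = g n + (\<Sum>j\<in>{Suc 1..<Suc n}. g (Suc n - j))"
    using n by (subst sum.atLeast_Suc_lessThan) auto
  also have "(\<Sum>j\<in>{Suc 1..<Suc n}. g (Suc n - j)) = (\<Sum>j\<in>{1..<n}. g (Suc n - Suc j))"
    by (rule sum.shift_bounds_Suc_ivl)
  finally show ?thesis by simp
qed

lemma range_count: fixes k d :: nat shows "k \<le> d \<Longrightarrow> (\<Sum>j\<in>{1..<d}. min k (d - j)) = (\<Sum>j\<in>{1..<d}. k - j) + k * (d - k)"
proof (induction d rule: nat_induct_at_least)
  case base
  have "(\<Sum>j\<in>{1..<k}. min k (k - j)) = (\<Sum>j\<in>{1..<k}. k - j)" by (intro sum.cong) auto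
  then show ?case by simp
next
  case (Suc n)
  have hi: "(\<Sum>j\<in>{1..<Suc n}. min k (Suc n - j)) = min k n + (\<Sum>j\<in>{1..<n}. min k (n - j))"
  proof (cases "n = 0")
    case True then show ?thesis by simp
  next
    case False then show ?thesis using rev_split[of n "\<lambda>t. min k t"] by simp
  qed
  have lo: "(\<Sum>j\<in>{1..<Suc n}. k - j) = (\<Sum>j\<in>{1..<n}. k - j) + (k - n)"
  proof (cases "n = 0")
    case True then show ?thesis using Suc.hyps by simp
  next
    case False then show ?thesis by (subst sum.atLeastLessThan_Suc) auto
  qed
  have "k * (Suc n - k) = k * (n - k) + k" using Suc.hyps by (simp add: Suc_diff_le)
  then show ?case using hi lo Suc by simp
qed

context onb begin

definition Phi :: "'a set \<Rightarrow> real \<Rightarrow> nat" where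
  "Phi W s = (\<Sum>j\<in>{1..<d}. cnt W j s)"

lemma main:
  assumes Wsub: "\<And>i. i \<le> M \<Longrightarrow> subspace (W i)" and Wdim: "\<And>i. i \<le> M \<Longrightarrow> dim (W i) = k"
    and step: "\<And>i. i < M \<Longrightarrow> \<exists>\<mu>. (\<forall>l<d. \<mu> l > 0) \<and>
        (\<forall>j. 1 \<le> j \<and> j < d \<longrightarrow> (\<exists>q>0. (\<forall>l<j. R * q \<le> \<mu> l) \<and> (\<forall>l. j \<le> l \<and> l < d \<longrightarrow> \<mu> l \<le> q)))
        \<and> W (Suc i) = D \<mu> ` W i"
    and M: "M = k * (d - k) + 1" and kd: "k \<le> d" and R: "R > 1"
    and eta: "0 < \<eta>" "\<eta> \<le> 1" and keta: "8 * real k \<le> (R - 1) * \<eta>"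
  shows "\<exists>i\<le>M. \<exists>K\<subseteq>{..<d}. card K = k \<and> (\<forall>v\<in>W i. norm (v - proj K v)^2 \<le> \<eta> * norm v ^ 2)"
proof -
  define LO where "LO = (\<Sum>j\<in>{1..<d}. k - j)"
  define HI where "HI = (\<Sum>j\<in>{1..<d}. min k (d - j))"
  have HL: "HI = LO + k * (d - k)" unfolding HI_def LO_def using range_count[OF kd] .
  have bounds: "LO \<le> Phi (W i) s \<and> Phi (W i) s \<le> HI" if "i \<le> M" "s \<ge> 0" for i s
  proof
    show "LO \<le> Phi (W i) s" unfolding LO_def Phi_def
      using cnt_lower[OF Wsub[OF that(1)] _ that(2)] Wdim[OF that(1)] by (intro sum_mono) auto
    show "Phi (W i) s \<le> HI" unfolding HI_def Phi_def
      using cnt_upper[OF Wsub[OF that(1)]] cnt_le_dim[OF Wsub[OF that(1)]] Wdim[OF that(1)]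
      by (intro sum_mono) (auto simp: min_def)
  qed
  have R01: "1/R < 1" using R by simp
  have R02: "1/R \<le> R" using R01 R by linarith
  have R0: "0 \<le> R" "0 \<le> 1/R" "1/R \<le> R" using R R02 by auto
  have mono1: "Phi (W i) (1/R) \<le> Phi (W i) R" if "i \<le> M" for i
    unfolding Phi_def using cnt_mono[OF Wsub[OF that] R0(3)] by (intro sum_mono) auto
  have mono2: "Phi (W (Suc i)) R \<le> Phi (W i) (1/R)" if iM: "i < M" for i
  proof -
    obtain \<mu> where mu: "\<forall>l<d. \<mu> l > 0"
      "\<forall>j. 1 \<le> j \<and> j < d \<longrightarrow> (\<exists>q>0. (\<forall>l<j. R * q \<le> \<mu> l) \<and> (\<forall>l. j \<le> l \<and> l < d \<longrightarrow> \<mu> l \<le> q))"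
      "W (Suc i) = D \<mu> ` W i" using step[OF iM] by blast
    have "cnt (W (Suc i)) j R \<le> cnt (W i) j (1/R)" if j: "j \<in> {1..<d}" for j
    proof -
      obtain q where q: "q > 0" "\<forall>l<j. R * q \<le> \<mu> l" "\<forall>l. j \<le> l \<and> l < d \<longrightarrow> \<mu> l \<le> q"
        using mu(2) j by auto
      have "cnt (D \<mu> ` W i) j R \<le> cnt (W i) j (R / R^2)"
        using cnt_step[where W="W i" and j=j and R=R and q=q and \<mu>=\<mu> and s=R] Wsub[of i] iM j mu(1) q R by auto
      moreover have "R / R^2 = 1/R" using R by (simp add: power2_eq_square)
      ultimately show ?thesis using mu(3) by simp
    qed
    then show ?thesis unfolding Phi_def by (intro sum_mono) auto
  qed
  have "\<exists>i<M. Phi (W i) (1/R) = Phi (W i) R"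
  proof (rule ccontr)
    assume "\<not> ?thesis"
    then have strict: "Phi (W (Suc i)) R < Phi (W i) R" if "i < M" for i
      using mono1[of i] mono2[OF that] that by fastforce
    have "Phi (W n) R + n \<le> Phi (W 0) R" if "n \<le> M" for n
      using that
    proof (induction n)
      case 0 then show ?case by simp
    next
      case (Suc n)
      then show ?case using strict[of n] by simp
    qed
    then have "Phi (W M) R + M \<le> Phi (W 0) R" by simp
    moreover have "LO \<le> Phi (W M) R" "Phi (W 0) R \<le> HI" using bounds R0 by auto
    ultimately show False using HL M by linarith
  qed
  then obtain i where iM: "i < M" and eqP: "Phi (W i) (1/R) = Phi (W i) R" by blast
  have sW: "subspace (W i)" using Wsub iM by simp
  have eqj: "cnt (W i) j (1/R) = cnt (W i) j R" if "1 \<le> j" "j < d" for j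
  proof -
    show ?thesis
      using sum_mono_inv[OF eqP[unfolded Phi_def], of j] cnt_mono[OF sW R0(3)] that by auto
  qed
  have dWi: "dim (W i) \<le> d" using Wdim[of i] iM kd by simp
  obtain K f where Kf: "K \<subseteq> {..<d}" "card K = dim (W i)"
    "\<forall>j\<in>K. f j \<in> W i \<and> f j \<noteq> 0 \<and> (R - 1) * sq ({..<d} - {j}) (f j) \<le> 2 * (f j \<bullet> e j)^2"
    using gap[OF sW dWi R eqj] by blast
  have cK: "card K = k" using Kf(2) Wdim[of i] iM by simp
  have "\<forall>v\<in>W i. norm (v - proj K v)^2 \<le> \<eta> * norm v ^ 2"
    using final_est[OF Kf(1) sW Kf(2) _ R eta] Kf(3) keta cK by auto
  then show ?thesis using iM Kf(1) cK by (intro exI[of _ i]) auto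
qed

end


lemma extract_basis:
  fixes Xs :: "nat \<Rightarrow> 'a::euclidean_space set" and tau :: "real \<Rightarrow> 'a \<Rightarrow> 'a"
  assumes hds: "hilbert_dilation_system Xs m tau" and smp: "simple_dilation_system Xs m"
  shows "\<exists>e w. onb e DIM('a) \<and> (\<forall>i j. i < j \<and> j < DIM('a) \<longrightarrow> (w i :: nat) < w j) \<and>
     (\<forall>\<delta>>0. \<forall>x. tau \<delta> x = onb.D e DIM('a) (\<lambda>l. \<delta> powr (- real (w l))) x)"
proof -
  have sub: "\<And>\<nu>. \<nu> \<in> {1..m} \<Longrightarrow> subspace (Xs \<nu>)"
    and orthX: "\<And>i j x y. i \<in> {1..m} \<Longrightarrow> j \<in> {1..m} \<Longrightarrow> i \<noteq> j \<Longrightarrow> x \<in> Xs i \<Longrightarrow> y \<in> Xs j \<Longrightarrow> x \<bullet> y = 0"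
    and spX: "span (\<Union>\<nu>\<in>{1..m}. Xs \<nu>) = UNIV"
    and lin: "\<And>\<delta>. \<delta> > 0 \<Longrightarrow> linear (tau \<delta>)"
    and act: "\<And>\<delta> \<nu> x. \<delta> > 0 \<Longrightarrow> \<nu> \<in> {1..m} \<Longrightarrow> x \<in> Xs \<nu> \<Longrightarrow> tau \<delta> x = (\<delta> powr (- real \<nu>)) *\<^sub>R x"
    using hds unfolding hilbert_dilation_system_def by blast+
  have dim1: "\<And>\<nu>. \<nu> \<in> {1..m} \<Longrightarrow> dim (Xs \<nu>) \<le> 1"
    using smp unfolding simple_dilation_system_def by blast
  define N where "N = {\<nu> \<in> {1..m}. Xs \<nu> \<noteq> {0}}"
  have finN: "finite N" unfolding N_def by auto
  have unitex: "\<exists>u. u \<in> Xs \<nu> \<and> norm u = 1" if "\<nu> \<in> N" for \<nu>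
  proof -
    have s: "subspace (Xs \<nu>)" using sub that unfolding N_def by auto
    have "Xs \<nu> \<noteq> {0}" using that unfolding N_def by auto
    moreover have "0 \<in> Xs \<nu>" using s by (rule subspace_0)
    ultimately obtain x where x: "x \<in> Xs \<nu>" "x \<noteq> 0" by blast
    then have "(1 / norm x) *\<^sub>R x \<in> Xs \<nu>" using s by (simp add: subspace_scale)
    moreover have "norm ((1 / norm x) *\<^sub>R x) = 1" using x by simp
    ultimately show ?thesis by blast
  qed
  define u where "u \<nu> = (SOME u. u \<in> Xs \<nu> \<and> norm u = 1)" for \<nu>
  have uprop: "u \<nu> \<in> Xs \<nu> \<and> norm (u \<nu>) = 1" if "\<nu> \<in> N" for \<nu>
    unfolding u_def using someI_ex[OF unitex[OF that]] .
  have line: "x = (x \<bullet> u \<nu>) *\<^sub>R u \<nu>" if nN: "\<nu> \<in> N" and xX: "x \<in> Xs \<nu>" for \<nu> x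
  proof -
    have nm: "\<nu> \<in> {1..m}" using nN unfolding N_def by auto
    have u0: "u \<nu> \<noteq> 0" using uprop[OF nN] by auto
    have "\<not> Xs \<nu> \<subseteq> {0}" using uprop[OF nN] u0 by auto
    then have "dim (Xs \<nu>) \<noteq> 0" by simp
    then have d1: "dim (Xs \<nu>) = 1" using dim1[OF nm] by linarith
    have "independent {u \<nu>}" using u0 by simp
    then have "Xs \<nu> \<subseteq> span {u \<nu>}"
      using card_eq_dim[of "{u \<nu>}" "Xs \<nu>"] uprop[OF nN] d1 by auto
    then obtain c where c: "x = c *\<^sub>R u \<nu>" using xX unfolding span_singleton by auto
    have "u \<nu> \<bullet> u \<nu> = 1" using uprop[OF nN] by (simp add: dot_square_norm)
    then have "x \<bullet> u \<nu> = c" using c by simp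
    then show ?thesis using c by simp
  qed
  have orth: "u \<nu> \<bullet> u \<nu>' = (if \<nu> = \<nu>' then 1 else 0)" if "\<nu> \<in> N" "\<nu>' \<in> N" for \<nu> \<nu>'
  proof (cases "\<nu> = \<nu>'")
    case True
    then show ?thesis using uprop[OF that(1)] by (simp add: dot_square_norm)
  next
    case False
    then show ?thesis using orthX[of \<nu> \<nu>' "u \<nu>" "u \<nu>'"] uprop that unfolding N_def by auto
  qed
  have spanU: "span (u ` N) = UNIV"
  proof -
    have "(\<Union>\<nu>\<in>{1..m}. Xs \<nu>) \<subseteq> span (u ` N)"
    proof
      fix x assume "x \<in> (\<Union>\<nu>\<in>{1..m}. Xs \<nu>)"
      then obtain \<nu> where \<nu>: "\<nu> \<in> {1..m}" "x \<in> Xs \<nu>" by auto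
      show "x \<in> span (u ` N)"
      proof (cases "\<nu> \<in> N")
        case True
        then have "x = (x \<bullet> u \<nu>) *\<^sub>R u \<nu>" using line \<nu> by auto
        moreover have "u \<nu> \<in> span (u ` N)" using True by (simp add: span_base)
        ultimately show ?thesis by (metis span_scale)
      next
        case False
        then have "x = 0" using \<nu> unfolding N_def by auto
        then show ?thesis by (simp add: span_zero)
      qed
    qed
    then have "span (\<Union>\<nu>\<in>{1..m}. Xs \<nu>) \<subseteq> span (u ` N)"
      by (metis span_mono span_span)
    then show ?thesis using spX by auto
  qed
  define xs where "xs = sorted_list_of_set N"
  have setxs: "set xs = N" unfolding xs_def using finN by simp
  have strict: "sorted_wrt (<) xs" unfolding xs_def by simp
  have dist: "distinct xs" using strict by (simp add: strict_sorted_iff)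
  define d where "d = length xs"
  define e where "e i = u (xs ! i)" for i
  define w where "w i = xs ! i" for i
  have wN: "w i \<in> N" if "i < d" for i unfolding w_def d_def using that setxs nth_mem by (metis d_def)
  have ex: "e ` {..<d} = u ` N"
  proof -
    have "(\<lambda>i. xs ! i) ` {..<d} = set xs" unfolding d_def by (auto simp: set_conv_nth)
    then show ?thesis unfolding e_def using setxs by (metis image_image)
  qed
  interpret O: onb e d
  proof
    fix i j assume ij: "i < d" "j < d"
    have "(xs ! i = xs ! j) = (i = j)" using dist ij unfolding d_def by (simp add: nth_eq_iff_index_eq)
    then show "e i \<bullet> e j = (if i = j then 1 else 0)"
      using orth[of "xs ! i" "xs ! j"] wN[OF ij(1)] wN[OF ij(2)] unfolding e_def w_def by auto
  next
    show "span (e ` {..<d}) = UNIV" using ex spanU by simp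
  qed
  have dD: "d = DIM('a)" by (rule O.d_eq)
  have wmono: "w i < w j" if "i < j" "j < d" for i j
    unfolding w_def using sorted_wrt_nth_less[OF strict that(1)] that(2) d_def by simp
  have tauf: "tau \<delta> x = O.D (\<lambda>l. \<delta> powr (- real (w l))) x" if dp: "\<delta> > 0" for \<delta> x
  proof -
    have "tau \<delta> x = tau \<delta> (\<Sum>i<d. (x \<bullet> e i) *\<^sub>R e i)" using O.expand[of x] by simp
    also have "\<dots> = (\<Sum>i<d. (x \<bullet> e i) *\<^sub>R tau \<delta> (e i))"
      using lin[OF dp] by (simp add: linear_sum linear_scale)
    also have "\<dots> = (\<Sum>i<d. (\<delta> powr (- real (w i)) * (x \<bullet> e i)) *\<^sub>R e i)"
    proof (rule sum.cong)
      fix i assume "i \<in> {..<d}"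
      then have "w i \<in> N" using wN by auto
      then have "w i \<in> {1..m}" "e i \<in> Xs (w i)" using uprop unfolding N_def e_def w_def by auto
      then show "(x \<bullet> e i) *\<^sub>R tau \<delta> (e i) = (\<delta> powr (- real (w i)) * (x \<bullet> e i)) *\<^sub>R e i"
        using act[OF dp] by simp
    qed simp
    finally show ?thesis unfolding O.D_def .
  qed
  show ?thesis
    using O.onb_axioms wmono tauf unfolding dD by blast
qed



context onb begin

lemma span_char: assumes K: "K \<subseteq> {..<d}"
  shows "span (e ` K) = {x. \<forall>l<d. l \<notin> K \<longrightarrow> x \<bullet> e l = 0}"
proof
  show "span (e ` K) \<subseteq> {x. \<forall>l<d. l \<notin> K \<longrightarrow> x \<bullet> e l = 0}"
    using coord_span_zero[OF _ K] by auto
  show "{x. \<forall>l<d. l \<notin> K \<longrightarrow> x \<bullet> e l = 0} \<subseteq> span (e ` K)"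
  proof
    fix x assume x: "x \<in> {x. \<forall>l<d. l \<notin> K \<longrightarrow> x \<bullet> e l = 0}"
    have "x = proj K x"
    proof (rule eq_iff_diff_eq_0[THEN iffD2], rule zero_coords)
      fix l assume "l < d"
      then show "(x - proj K x) \<bullet> e l = 0" using x proj_coord[OF K, of l x] by (auto simp: inner_diff_left)
    qed
    then show "x \<in> span (e ` K)" using proj_in_span by metis
  qed
qed

lemma proj_orth: assumes K: "K \<subseteq> {..<d}" and u: "u \<in> span (e ` K)"
  shows "(v - proj K v) \<bullet> u = 0"
proof -
  have "orthogonal (v - proj K v) u"
  proof (rule orthogonal_to_span[OF u])
    fix y assume "y \<in> e ` K"
    then obtain l where l: "l \<in> K" "y = e l" by auto
    then have "l < d" using K by auto
    then show "orthogonal (v - proj K v) y" using l proj_coord[OF K, of l v]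
      by (simp add: orthogonal_def inner_diff_left)
  qed
  then show ?thesis by (simp add: orthogonal_def)
qed

lemma orth_proj_eq: assumes K: "K \<subseteq> {..<d}" shows "orth_proj (span (e ` K)) v = proj K v"
  unfolding orth_proj_def
proof (rule the_equality)
  show "proj K v \<in> span (e ` K) \<and> (\<forall>u\<in>span (e ` K). (v - proj K v) \<bullet> u = 0)"
    using proj_in_span proj_orth[OF K] by auto
  fix w assume w: "w \<in> span (e ` K) \<and> (\<forall>u\<in>span (e ` K). (v - w) \<bullet> u = 0)"
  have m: "w - proj K v \<in> span (e ` K)" using w proj_in_span by (simp add: span_diff)
  have "(v - w) \<bullet> (w - proj K v) = 0" using w m by auto
  moreover have "(v - proj K v) \<bullet> (w - proj K v) = 0" using proj_orth[OF K m] .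
  ultimately have "(w - proj K v) \<bullet> (w - proj K v) = 0"
    by (simp add: inner_diff_left inner_diff_right algebra_simps)
  then show "w = proj K v" by simp
qed

lemma pyth: assumes K: "K \<subseteq> {..<d}" shows "norm v ^ 2 = norm (proj K v) ^ 2 + norm (v - proj K v) ^ 2"
proof -
  have "orthogonal (proj K v) (v - proj K v)"
    using proj_orth[OF K proj_in_span, of v] by (simp add: orthogonal_def inner_commute)
  then have "norm (proj K v + (v - proj K v))^2 = norm (proj K v)^2 + norm (v - proj K v)^2"
    by (rule norm_add_Pythagorean)
  then show ?thesis by simp
qed

lemma cos_bound:
  assumes K: "K \<subseteq> {..<d}" and W: "subspace W" "W \<noteq> {0}"
    and bnd: "\<forall>v\<in>W. norm (v - proj K v)^2 \<le> \<eta> * norm v ^ 2" and eta: "0 < \<eta>" "\<eta> < 1"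
  shows "cos (theta_max W (span (e ` K))) \<ge> 1 - \<eta>"
proof -
  define S where "S = {norm (orth_proj (span (e ` K)) v) / norm v | v. v \<in> W \<and> v \<noteq> 0}"
  have Sel: "1 - \<eta> \<le> s \<and> s \<le> 1" if sS: "s \<in> S" for s
  proof -
    obtain v where v: "s = norm (proj K v) / norm v" "v \<in> W" "v \<noteq> 0"
      using sS orth_proj_eq[OF K] unfolding S_def by auto
    have nv: "norm v > 0" using v by simp
    have p: "norm v ^ 2 = norm (proj K v) ^ 2 + norm (v - proj K v) ^ 2" by (rule pyth[OF K])
    have "norm (proj K v) ^ 2 \<le> norm v ^ 2" using p by simp
    then have le1: "norm (proj K v) \<le> norm v" by (rule power2_le_imp_le) simp
    have bv: "norm (v - proj K v)^2 \<le> \<eta> * norm v ^ 2" using bnd v(2) by blast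
    have "(1 - \<eta>) * norm v ^ 2 \<le> norm (proj K v) ^ 2" using p bv by (simp add: algebra_simps)
    moreover have "((1 - \<eta>) * norm v) ^ 2 \<le> (1 - \<eta>) * norm v ^ 2"
    proof -
      have "(1 - \<eta>)^2 \<le> (1 - \<eta>)" using eta by (simp add: power2_eq_square mult_le_cancel_left1)
      then show ?thesis by (simp add: power_mult_distrib mult_right_mono)
    qed
    ultimately have "((1 - \<eta>) * norm v) ^ 2 \<le> norm (proj K v) ^ 2" by linarith
    then have ge: "(1 - \<eta>) * norm v \<le> norm (proj K v)" by (rule power2_le_imp_le) simp
    show ?thesis unfolding v(1) using nv le1 ge by (simp add: field_simps)
  qed
  obtain v where v: "v \<in> W" "v \<noteq> 0" using W subspace_0 by blast
  have ne: "S \<noteq> {}" unfolding S_def using v by auto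
  have bdd: "bdd_below S" using Sel by (auto intro: bdd_belowI[of _ "1 - \<eta>"])
  have i1: "1 - \<eta> \<le> Inf S" using Sel ne by (intro cInf_greatest) auto
  obtain s where "s \<in> S" using ne by auto
  then have i2: "Inf S \<le> 1" using Sel cInf_lower[OF _ bdd] by (meson order_trans)
  have "cos (arccos (Inf S)) = Inf S" using i1 i2 eta by (intro cos_arccos) auto
  then show ?thesis unfolding theta_max_def S_def[symmetric] using i1 by simp
qed

lemma D_comp: "D \<mu> (D \<nu> x) = D (\<lambda>l. \<mu> l * \<nu> l) x"
  unfolding D_def[of \<mu>] D_def[of "\<lambda>l. \<mu> l * \<nu> l"] by (intro sum.cong) (auto simp: D_coord)

lemma D_span: assumes K: "K \<subseteq> {..<d}" and mu: "\<And>l. l < d \<Longrightarrow> \<mu> l \<noteq> 0"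
  shows "D \<mu> ` span (e ` K) = span (e ` K)"
proof
  show "D \<mu> ` span (e ` K) \<subseteq> span (e ` K)" unfolding span_char[OF K] by (auto simp: D_coord)
  show "span (e ` K) \<subseteq> D \<mu> ` span (e ` K)"
  proof
    fix x assume x: "x \<in> span (e ` K)"
    have "D (\<lambda>l. 1 / \<mu> l) x \<in> span (e ` K)" using x unfolding span_char[OF K] by (auto simp: D_coord)
    moreover have "D \<mu> (D (\<lambda>l. 1 / \<mu> l) x) = x"
    proof -
      have "D (\<lambda>l. 1 / (1 / \<mu> l)) (D (\<lambda>l. 1 / \<mu> l) x) = x" using D_inv[of "\<lambda>l. 1 / \<mu> l"] mu by simp
      then show ?thesis by simp
    qed
    ultimately show "x \<in> D \<mu> ` span (e ` K)" by (metis image_eqI)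
  qed
qed

lemma dim_D_image: assumes mu: "\<And>l. l < d \<Longrightarrow> \<mu> l \<noteq> 0"
  shows "dim (D \<mu> ` H) = dim H"
proof -
  have "inj_on (D \<mu>) (span H)"
    by (rule inj_on_inverseI[where g="D (\<lambda>l. 1 / \<mu> l)"]) (use D_inv mu in auto)
  then show ?thesis by (rule dim_image_eq[OF linear_D])
qed

end

lemma two_pow: "2 * n \<le> (2::nat) ^ n"
proof (induction n)
  case 0
  then show ?case by simp
next
  case (Suc n)
  show ?case
  proof (cases "n = 0")
    case True
    then show ?thesis by simp
  next
    case False
    then have "(2::nat) ^ 1 \<le> 2 ^ n" by (intro power_increasing) auto
    then show ?thesis using Suc.IH by simp
  qed
qed



lemma L1: "k \<le> (D::nat) \<Longrightarrow> k*(D-k) + 1 + (k^2+1) = D*k + 2"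
  by (simp add: diff_mult_distrib2 power2_eq_square algebra_simps mult_le_mono)

lemma L2: "1 \<le> k \<Longrightarrow> k \<le> (D::nat) \<Longrightarrow> 2*(k*(D-k)+1) \<le> (D+1)*(k^2+1)"
proof -
  assume k1: "1 \<le> k" and kD: "k \<le> D"
  have a: "k*(D-k) \<le> k*D" by simp
  show ?thesis
  proof (cases "k = 1")
    case True
    then show ?thesis by simp
  next
    case False
    then have "2 \<le> k" using k1 by simp
    then have "2 * k \<le> k * k" by simp
    then have "2 * k * D \<le> k * k * D" by (rule mult_right_mono) simp
    then have b: "2 * (k * D) \<le> k^2 * D" by (simp add: power2_eq_square mult.assoc)
    have "(D+1)*(k^2+1) = k^2 * D + (D + k^2 + 1)" by (simp add: algebra_simps)
    moreover have "D + k^2 + 1 \<ge> 2" using k1 kD by linarith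
    ultimately have c: "k^2 * D + 2 \<le> (D+1)*(k^2+1)" by linarith
    have "2*(k*(D-k)+1) = 2*(k*(D-k)) + 2" by simp
    also have "\<dots> \<le> 2*(k*D) + 2" using a by simp
    also have "\<dots> \<le> k^2 * D + 2" using b by simp
    finally show ?thesis using c by linarith
  qed
qed

theorem proposition4p3:
  fixes Xs :: "nat \<Rightarrow> 'a::euclidean_space set" and m :: nat
    and tau :: "real \<Rightarrow> 'a \<Rightarrow> 'a"
    and k :: nat and H :: "'a set" and \<eta> a b :: real
  assumes "hilbert_dilation_system Xs m tau"
    and "simple_dilation_system Xs m"
    and "1 \<le> k" and "k \<le> DIM('a)"
    and "subspace H" and "dim H = k"
    and "0 < \<eta>" and "\<eta> < 1/2"
    and "0 < a" and "a \<le> b"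
    and "b / a \<ge> (2 ^ DIM('a) / \<eta>) ^ (DIM('a) * k + 2)"
  shows "\<exists>\<delta>\<in>{a..b}. \<exists>V. subspace V \<and> dim V = k \<and> dilation_invariant tau V \<and>
           cos (theta_max (tau \<delta> ` H) V) \<ge> 1 - \<eta>"
proof -
  note k1 = assms(3) and kD = assms(4) and sH = assms(5) and dH = assms(6)
    and eta = assms(7,8) and ab = assms(9,10) and ratio = assms(11)
  obtain e w where O: "onb e DIM('a)" and wm: "\<forall>i j. i < j \<and> j < DIM('a) \<longrightarrow> (w i :: nat) < w j"
    and tf: "\<forall>\<delta>>0. \<forall>x. tau \<delta> x = onb.D e DIM('a) (\<lambda>l. \<delta> powr (- real (w l))) x"
    using extract_basis[OF assms(1,2)] by blast
  interpret onb e "DIM('a)" by (rule O)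
  define mu where "mu \<delta> l = \<delta> powr (- real (w l))" for \<delta> l
  have tauD: "tau \<delta> = D (mu \<delta>)" if "\<delta> > 0" for \<delta>
    using tf that unfolding mu_def by auto
  have munz: "mu \<delta> l \<noteq> 0" if "\<delta> > 0" for \<delta> l using that unfolding mu_def by simp
  have Wp: "subspace (tau \<delta> ` H) \<and> dim (tau \<delta> ` H) = k" if dp: "\<delta> > 0" for \<delta>
    using linear_subspace_image[OF linear_D sH] dim_D_image[of "mu \<delta>" H] munz[OF dp] dH tauD[OF dp]
    by simp
  have key: "\<exists>\<delta>\<in>{a..b}. \<exists>K\<subseteq>{..<DIM('a)}. card K = k \<and>
      (\<forall>v\<in>tau \<delta> ` H. norm (v - proj K v)^2 \<le> \<eta> * norm v ^ 2)"
  proof (cases "k = DIM('a)")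
    case True
    have "\<forall>v\<in>tau a ` H. norm (v - proj {..<DIM('a)} v)^2 \<le> \<eta> * norm v ^ 2"
    proof
      fix v
      have "proj {..<DIM('a)} v = v" unfolding proj_def using expand[of v] by simp
      then show "norm (v - proj {..<DIM('a)} v)^2 \<le> \<eta> * norm v ^ 2" using eta by simp
    qed
    then show ?thesis using True ab by (intro bexI[of _ a]) auto
  next
    case False
    then have kl: "k < DIM('a)" using kD by simp
    define Dm where "Dm = DIM('a)"
    define X where "X = 2 ^ Dm / \<eta>"
    define R where "R = 4 * X"
    define M where "M = k * (Dm - k) + 1"
    define W where "W i = tau (a * R ^ i) ` H" for i
    have X2: "X \<ge> 2 ^ (Dm + 1)"
    proof -
      have "2 \<le> 1 / \<eta>" using eta by (simp add: field_simps)
      then have "2 ^ Dm * 2 \<le> 2 ^ Dm * (1 / \<eta>)" by (intro mult_left_mono) auto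
      then show ?thesis unfolding X_def by simp
    qed
    have X1: "X \<ge> 1" using X2 by (smt (verit) one_le_power)
    have R1: "R > 1" unfolding R_def using X1 by simp
    have Rpos: "R > 0" using R1 by simp
    have Rh: "R * \<eta> = 4 * 2 ^ Dm" unfolding R_def X_def using eta by simp
    have keta: "8 * real k \<le> (R - 1) * \<eta>"
    proof -
      have "2 * Dm \<le> (2::nat) ^ Dm" by (rule two_pow)
      then have "real (2 * Dm) \<le> real ((2::nat) ^ Dm)" by (simp only: of_nat_le_iff)
      then have "2 * real Dm \<le> 2 ^ Dm" by simp
      moreover have "real k + 1 \<le> real Dm" using kl unfolding Dm_def by simp
      ultimately have "8 * real k + 8 \<le> 4 * 2 ^ Dm" by linarith
      then show ?thesis using Rh eta by (simp add: algebra_simps)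
    qed
    have RM: "R ^ M \<le> X ^ (Dm * k + 2)"
    proof -
      have "(2::real) ^ (2 * M) \<le> 2 ^ ((Dm + 1) * (k^2 + 1))"
        using L2[OF k1 kD] unfolding M_def Dm_def by (intro power_increasing) auto
      also have "\<dots> = (2 ^ (Dm + 1)) ^ (k^2 + 1)" by (rule power_mult)
      also have "\<dots> \<le> X ^ (k^2 + 1)" using X2 by (intro power_mono) auto
      finally have a1: "(4::real) ^ M \<le> X ^ (k^2 + 1)" by (simp add: power_mult)
      have "R ^ M = 4 ^ M * X ^ M" unfolding R_def by (simp add: power_mult_distrib)
      also have "\<dots> \<le> X ^ (k^2 + 1) * X ^ M" using a1 X1 by (intro mult_right_mono) auto
      also have "\<dots> = X ^ (M + (k^2 + 1))" by (simp add: power_add)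
      also have "M + (k^2 + 1) = Dm * k + 2" using L1[OF kD] unfolding M_def Dm_def by simp
      finally show ?thesis .
    qed
    have Wsub: "subspace (W i)" "dim (W i) = k" for i
      using Wp[of "a * R ^ i"] ab Rpos unfolding W_def by auto
    have step: "\<exists>\<mu>. (\<forall>l<DIM('a). \<mu> l > 0) \<and>
        (\<forall>j. 1 \<le> j \<and> j < DIM('a) \<longrightarrow> (\<exists>q>0. (\<forall>l<j. R * q \<le> \<mu> l) \<and> (\<forall>l. j \<le> l \<and> l < DIM('a) \<longrightarrow> \<mu> l \<le> q)))
        \<and> W (Suc i) = D \<mu> ` W i" for i
    proof (intro exI[of _ "mu R"] conjI allI impI)
      show "mu R l > 0" for l unfolding mu_def using Rpos by simp
      fix j assume j: "1 \<le> j \<and> j < DIM('a)"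
      show "\<exists>q>0. (\<forall>l<j. R * q \<le> mu R l) \<and> (\<forall>l. j \<le> l \<and> l < DIM('a) \<longrightarrow> mu R l \<le> q)"
      proof (intro exI[of _ "mu R j"] conjI allI impI)
        show "mu R j > 0" unfolding mu_def using Rpos by simp
        fix l
        assume lj: "l < j"
        then have "w l < w j" using wm j by auto
        then have "1 + (- real (w j)) \<le> - real (w l)" by simp
        then have "R powr (1 + (- real (w j))) \<le> R powr (- real (w l))" using R1 by (intro powr_mono) auto
        moreover have "R powr (1 + (- real (w j))) = R * R powr (- real (w j))"
          using Rpos by (subst powr_add) simp
        ultimately show "R * mu R j \<le> mu R l" unfolding mu_def by simp
      next
        fix l assume lj: "j \<le> l \<and> l < DIM('a)"
        then have "w j \<le> w l" using wm by (cases "j = l") (auto intro: less_imp_le)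
        then have "- real (w l) \<le> - real (w j)" by simp
        then show "mu R l \<le> mu R j" unfolding mu_def using R1 by (intro powr_mono) auto
      qed
    next
      have p1: "a * R ^ i > 0" using ab Rpos by simp
      have p2: "a * R ^ Suc i > 0" using ab Rpos by simp
      have "tau (a * R ^ Suc i) x = D (mu R) (tau (a * R ^ i) x)" for x
      proof -
        have "D (mu R) (tau (a * R ^ i) x) = D (\<lambda>l. mu R l * mu (a * R ^ i) l) x"
          unfolding tauD[OF p1] by (rule D_comp)
        also have "(\<lambda>l. mu R l * mu (a * R ^ i) l) = mu (a * R ^ Suc i)"
          unfolding mu_def by (auto simp: powr_mult[symmetric] algebra_simps)
        finally show ?thesis using tauD[OF p2] by simp
      qed
      then show "W (Suc i) = D (mu R) ` W i" unfolding W_def by (auto simp: image_image)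
    qed
    have etale: "\<eta> \<le> 1" using eta by simp
    obtain i K where iM: "i \<le> M" and K: "K \<subseteq> {..<DIM('a)}" "card K = k"
      and bd: "\<forall>v\<in>W i. norm (v - proj K v)^2 \<le> \<eta> * norm v ^ 2"
      using main[of M W k R \<eta>, OF Wsub step _ kD R1 eta(1) etale keta] unfolding M_def Dm_def by blast
    have dl: "a \<le> a * R ^ i" using ab R1 by (simp add: one_le_power)
    have "a * R ^ i \<le> a * R ^ M" using ab R1 iM by (intro mult_left_mono power_increasing) auto
    also have "\<dots> \<le> a * X ^ (Dm * k + 2)" using RM ab by (intro mult_left_mono) auto
    also have "\<dots> \<le> b" using ratio ab unfolding X_def Dm_def by (simp add: field_simps)
    finally have du: "a * R ^ i \<le> b" .
    show ?thesis using dl du K bd unfolding W_def by (intro bexI[of _ "a * R ^ i"]) auto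
  qed
  then obtain \<delta> K where dab: "\<delta> \<in> {a..b}" and K: "K \<subseteq> {..<DIM('a)}" "card K = k"
    and bd: "\<forall>v\<in>tau \<delta> ` H. norm (v - proj K v)^2 \<le> \<eta> * norm v ^ 2" by blast
  have dpos: "\<delta> > 0" using dab ab by auto
  define V where "V = span (e ` K)"
  have sV: "subspace V" unfolding V_def by simp
  have dV: "dim V = k" unfolding V_def using dim_span_e[OF K(1)] K(2) by simp
  have inv: "dilation_invariant tau V"
    unfolding dilation_invariant_def
  proof (intro conjI allI impI)
    show "subspace V" by (rule sV)
    fix \<delta>' :: real assume "\<delta>' > 0"
    then show "tau \<delta>' ` V = V" unfolding V_def tauD[OF \<open>\<delta>' > 0\<close>]
      using D_span[OF K(1)] munz by blast
  qed
  have Wne: "tau \<delta> ` H \<noteq> {0}"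
  proof
    assume "tau \<delta> ` H = {0}"
    then have "dim (tau \<delta> ` H) = 0" by simp
    then show False using Wp[OF dpos] k1 by simp
  qed
  have "cos (theta_max (tau \<delta> ` H) V) \<ge> 1 - \<eta>"
    unfolding V_def using cos_bound[OF K(1) conjunct1[OF Wp[OF dpos]] Wne bd] eta by simp
  then show ?thesis using dab sV dV inv by blast
qed


end
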